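(* Let $P$ be a continuous distribution supported on $[0,1]$ with invertible CDF such that the total variation distance between $\mathrm{Unif}(0,1)$ and $P$ is at most $\epsilon\le\frac1{10}$. Then for all $n,m$ and every preference profile $\sigma$, any alternative $b$ maximizing the Borda score satisfies $\mathbb{E}_P[\mathrm{sw}(b,u)]\ge(1-5\epsilon)\max_{j\in A}\mathbb{E}_P[\mathrm{sw}(j,u)]$.
   Context: There are $n$ voters and $m$ alternatives $A=\{1,\dots,m\}$. A preference profile $\sigma$ consists of a ranking of $A$ for each voter; position $1$ is the top. Given a distribution $P$ and profile $\sigma$, a random utility profile $u$ consistent with $\sigma$ is generated as follows: independently for each voter $i$, draw $m$ i.i.d. samples from $P$ and assign them, from highest to lowest, to the alternatives in the order of voter $i$'s ranking. The social welfare of $j$ is $\mathrm{sw}(j,u)=\sum_i u_{ij}$; $\mathbb{E}_P$ is expectation over $u$. The Borda score of alternative $j$ is $\sum_{i=1}^n(m+1-r^j_i)$, where $r^j_i$ is the position of $j$ in voter $i$'s ranking. *)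

theory Defs
  imports "HOL-Probability.Probability"
begin

definition tv_unif :: "real measure \<Rightarrow> real" where
  "tv_unif P = (SUP A \<in> sets borel. \<bar>measure P A - measure lborel (A \<inter> {0..1})\<bar>)"

(* A preference profile: voter i \<in> {1..n} ranks alternatives {1..m};
   rk i j is the position of alternative j in voter i's ranking (1 = top). *)
definition is_profile :: "nat \<Rightarrow> nat \<Rightarrow> (nat \<Rightarrow> nat \<Rightarrow> nat) \<Rightarrow> bool" where
  "is_profile n m rk \<longleftrightarrow> (\<forall>i\<in>{1..n}. bij_betw (rk i) {1..m} {1..m})"

definition borda :: "nat \<Rightarrow> nat \<Rightarrow> (nat \<Rightarrow> nat \<Rightarrow> nat) \<Rightarrow> nat \<Rightarrow> nat" where
  "borda n m rk j = (\<Sum>i=1..n. m + 1 - rk i j)"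

definition kth_largest :: "real list \<Rightarrow> nat \<Rightarrow> real" where
  "kth_largest xs k = rev (sort xs) ! (k - 1)"

(* Sample space: x (i,l) is the l-th of the m i.i.d. draws for voter i.
   The utility of voter i for alternative j is the (rk i j)-th largest draw of voter i. *)
definition utility :: "nat \<Rightarrow> (nat \<Rightarrow> nat \<Rightarrow> nat) \<Rightarrow> (nat \<times> nat \<Rightarrow> real) \<Rightarrow> nat \<Rightarrow> nat \<Rightarrow> real" where
  "utility m rk x i j = kth_largest (map (\<lambda>l. x (i, l)) [1..<m+1]) (rk i j)"

definition sw :: "nat \<Rightarrow> nat \<Rightarrow> (nat \<Rightarrow> nat \<Rightarrow> nat) \<Rightarrow> (nat \<times> nat \<Rightarrow> real) \<Rightarrow> nat \<Rightarrow> real" where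
  "sw n m rk x j = (\<Sum>i=1..n. utility m rk x i j)"

definition exp_sw :: "real measure \<Rightarrow> nat \<Rightarrow> nat \<Rightarrow> (nat \<Rightarrow> nat \<Rightarrow> nat) \<Rightarrow> nat \<Rightarrow> real" where
  "exp_sw P n m rk j =
     integral\<^sup>L (PiM ({1..n} \<times> {1..m}) (\<lambda>_. P)) (\<lambda>x. sw n m rk x j)"

end

theory Submission
  imports Defs
begin


lemma kth_gt_iff:
  fixes xs :: "real list"
  assumes k: "1 \<le> k" "k \<le> length xs"
  shows "t < kth_largest xs k \<longleftrightarrow> k \<le> card {j. j < length xs \<and> t < xs ! j}"
proof -
  define zs where "zs = sort xs"
  define L where "L = length xs"
  have lz: "length zs = L" by (simp add: zs_def L_def)
  have sz: "sorted zs" by (simp add: zs_def)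
  have kth: "kth_largest xs k = zs ! (L - k)"
    using k by (simp add: kth_largest_def zs_def L_def rev_nth)
  have "card {j. j < length xs \<and> t < xs ! j} = length (filter (\<lambda>y. t < y) xs)"
    by (simp add: length_filter_conv_card)
  also have "\<dots> = length (filter (\<lambda>y. t < y) zs)"
    by (metis zs_def mset_filter mset_sort size_mset)
  also have "\<dots> = card {j. j < L \<and> t < zs ! j}"
    by (simp add: length_filter_conv_card lz)
  finally have c: "card {j. j < length xs \<and> t < xs ! j} = card {j. j < L \<and> t < zs ! j}" .
  show ?thesis
  proof
    assume h: "t < kth_largest xs k"
    have "{L - k..<L} \<subseteq> {j. j < L \<and> t < zs ! j}"
    proof
      fix j assume j: "j \<in> {L - k..<L}"
      have "zs ! (L - k) \<le> zs ! j" using j sz lz by (intro sorted_nth_mono) auto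
      then show "j \<in> {j. j < L \<and> t < zs ! j}" using h kth j by auto
    qed
    then have "card {L - k..<L} \<le> card {j. j < L \<and> t < zs ! j}"
      by (intro card_mono) auto
    then show "k \<le> card {j. j < length xs \<and> t < xs ! j}" using c k by (simp add: L_def)
  next
    assume h: "k \<le> card {j. j < length xs \<and> t < xs ! j}"
    show "t < kth_largest xs k"
    proof (rule ccontr)
      assume "\<not> t < kth_largest xs k"
      then have le: "zs ! (L - k) \<le> t" using kth by simp
      have "{j. j < L \<and> t < zs ! j} \<subseteq> {L - k + 1..<L}"
      proof
        fix j assume j: "j \<in> {j. j < L \<and> t < zs ! j}"
        have "\<not> j \<le> L - k"
        proof
          assume "j \<le> L - k"
          then have "zs ! j \<le> zs ! (L - k)" using sz lz k L_def by (intro sorted_nth_mono) auto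
          then show False using j le by auto
        qed
        then show "j \<in> {L - k + 1..<L}" using j by auto
      qed
      then have "card {j. j < L \<and> t < zs ! j} \<le> card {L - k + 1..<L}"
        by (intro card_mono) auto
      then show False using h c k L_def by auto
    qed
  qed
qed

lemma utility_gt_iff:
  assumes k: "1 \<le> rk i j" "rk i j \<le> m"
  shows "t < utility m rk x i j \<longleftrightarrow> rk i j \<le> card {l\<in>{1..m}. t < x (i, l)}"
proof -
  define xs where "xs = map (\<lambda>l. x (i, l)) [1..<m+1]"
  have lx: "length xs = m" by (simp add: xs_def)
  have nth: "xs ! j = x (i, Suc j)" if "j < m" for j using that by (simp add: xs_def nth_map_upt del: upt_Suc)
  have "card {j. j < length xs \<and> t < xs ! j} = card {j. j < m \<and> t < x (i, Suc j)}"
    using nth lx by (intro arg_cong[where f=card]) auto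
  also have "\<dots> = card (Suc ` {j. j < m \<and> t < x (i, Suc j)})"
    by (simp add: card_image)
  also have "Suc ` {j. j < m \<and> t < x (i, Suc j)} = {l\<in>{1..m}. t < x (i, l)}"
  proof (rule set_eqI, rule iffI)
    fix l assume "l \<in> {l\<in>{1..m}. t < x (i, l)}"
    then have "l - 1 \<in> {j. j < m \<and> t < x (i, Suc j)}" "l = Suc (l - 1)" by auto
    then show "l \<in> Suc ` {j. j < m \<and> t < x (i, Suc j)}" by blast
  qed auto
  finally have c: "card {j. j < length xs \<and> t < xs ! j} = card {l\<in>{1..m}. t < x (i, l)}" .
  have "utility m rk x i j = kth_largest xs (rk i j)" by (simp add: utility_def xs_def)
  then show ?thesis using kth_gt_iff[of "rk i j" xs t] k lx c by simp
qed



definition phi :: "nat \<Rightarrow> nat \<Rightarrow> real \<Rightarrow> real" where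
  "phi m k p = (\<Sum>s\<in>{k..m}. real (m choose s) * p ^ s * (1 - p) ^ (m - s))"

lemma space_P_UNIV: "sets P = sets borel \<Longrightarrow> space P = UNIV"
  by (metis sets_eq_imp_space_eq space_borel)

lemma measure_PiE_prod:
  assumes "prob_space P" "sets P = sets borel" "finite I" "\<And>\<iota>. \<iota> \<in> I \<Longrightarrow> A \<iota> \<in> sets borel"
  shows "measure (PiM I (\<lambda>_. P)) (PiE I A) = (\<Prod>\<iota>\<in>I. measure P (A \<iota>))"
proof -
  interpret prob_space P by fact
  interpret product_sigma_finite "\<lambda>_. P"
    by (simp add: product_sigma_finite_def prob_space_imp_sigma_finite assms(1))
  have "emeasure (PiM I (\<lambda>_. P)) (PiE I A) = (\<Prod>\<iota>\<in>I. emeasure P (A \<iota>))"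
    using assms by (intro emeasure_PiM) auto
  also have "\<dots> = ennreal (\<Prod>\<iota>\<in>I. measure P (A \<iota>))"
    by (simp add: emeasure_eq_measure prod_ennreal)
  finally show ?thesis by (simp add: measure_def prod_nonneg)
qed

lemma sum_subsets_card:
  fixes p q :: real
  shows "(\<Sum>S\<in>{S. S \<subseteq> {1..m} \<and> k \<le> card S}. p ^ card S * q ^ (m - card S))
       = (\<Sum>s\<in>{k..m}. real (m choose s) * p ^ s * q ^ (m - s))"
proof -
  have fin: "finite {S. S \<subseteq> {1..(m::nat)} \<and> card S = s}" for s by auto
  have eq: "{S. S \<subseteq> {1..m} \<and> k \<le> card S} = (\<Union>s\<in>{k..m}. {S. S \<subseteq> {1..m} \<and> card S = s})"
  proof (rule set_eqI, rule iffI)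
    fix S assume S: "S \<in> {S. S \<subseteq> {1..m} \<and> k \<le> card S}"
    then have "card S \<le> m" using card_mono[of "{1..m}" S] by auto
    then show "S \<in> (\<Union>s\<in>{k..m}. {S. S \<subseteq> {1..m} \<and> card S = s})" using S by auto
  qed auto
  have "(\<Sum>S\<in>{S. S \<subseteq> {1..m} \<and> k \<le> card S}. p ^ card S * q ^ (m - card S))
      = (\<Sum>s\<in>{k..m}. \<Sum>S\<in>{S. S \<subseteq> {1..m} \<and> card S = s}. p ^ card S * q ^ (m - card S))"
    unfolding eq by (rule sum.UNION_disjoint) (auto simp: fin)
  also have "\<dots> = (\<Sum>s\<in>{k..m}. \<Sum>S\<in>{S. S \<subseteq> {1..m} \<and> card S = s}. p ^ s * q ^ (m - s))"
    by (intro sum.cong refl) auto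
  also have "\<dots> = (\<Sum>s\<in>{k..m}. real (m choose s) * p ^ s * q ^ (m - s))"
    by (intro sum.cong refl) (simp add: n_subsets)
  finally show ?thesis .
qed

lemma prob_count_event:
  assumes P: "prob_space P" "sets P = sets borel" and I: "finite I" "{i} \<times> {1..m} \<subseteq> I"
  shows "{x\<in>space (PiM I (\<lambda>_. P)). k \<le> card {l\<in>{1..m}. t < x (i,l)}} \<in> sets (PiM I (\<lambda>_. P))"
    and "measure (PiM I (\<lambda>_. P)) {x\<in>space (PiM I (\<lambda>_. P)). k \<le> card {l\<in>{1..m}. t < x (i,l)}}
          = phi m k (1 - cdf P t)"
proof -
  interpret prob_space P by fact
  define \<Omega> where "\<Omega> = PiM I (\<lambda>_. P)"
  have spP: "space P = UNIV" using P(2) by (rule space_P_UNIV)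
  have sp\<Omega>: "space \<Omega> = PiE I (\<lambda>_. UNIV)" by (simp add: \<Omega>_def space_PiM spP)
  define A where "A S = (\<lambda>(a,l). if a = i \<and> l \<in> {1..m} then (if l \<in> S then {t<..} else {..t}) else (UNIV::real set))" for S :: "nat set"
  define E where "E S = PiE I (A S)" for S
  define SS where "SS = {S. S \<subseteq> {1..m} \<and> k \<le> card S}"
  have Asets: "A S \<iota> \<in> sets borel" for S \<iota> by (auto simp: A_def split: prod.splits)
  have Esets: "E S \<in> sets \<Omega>" for S unfolding E_def \<Omega>_def using I Asets P(2)
    by (intro sets_PiM_I_finite) auto
  have E_iff: "x \<in> E S \<longleftrightarrow> x \<in> space \<Omega> \<and> (\<forall>l\<in>{1..m}. (t < x (i,l) \<longleftrightarrow> l \<in> S))" for x S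
  proof
    assume x: "x \<in> E S"
    then have "x \<in> space \<Omega>" unfolding sp\<Omega> E_def by (auto simp: PiE_iff)
    moreover have "t < x (i,l) \<longleftrightarrow> l \<in> S" if l: "l \<in> {1..m}" for l
    proof -
      have "(i,l) \<in> I" using l I by auto
      then have "x (i,l) \<in> A S (i,l)" using x unfolding E_def by (auto simp: PiE_iff)
      then show ?thesis using l by (auto simp: A_def split: if_splits)
    qed
    ultimately show "x \<in> space \<Omega> \<and> (\<forall>l\<in>{1..m}. (t < x (i,l) \<longleftrightarrow> l \<in> S))" by blast
  next
    assume x: "x \<in> space \<Omega> \<and> (\<forall>l\<in>{1..m}. (t < x (i,l) \<longleftrightarrow> l \<in> S))"
    show "x \<in> E S" unfolding E_def PiE_iff
    proof
      show "\<forall>\<iota>\<in>I. x \<iota> \<in> A S \<iota>"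
        using x by (auto simp: A_def not_less)
      show "x \<in> extensional I" using x sp\<Omega> by (auto simp: PiE_iff)
    qed
  qed
  have union: "{x\<in>space \<Omega>. k \<le> card {l\<in>{1..m}. t < x (i,l)}} = (\<Union>S\<in>SS. E S)"
  proof (rule set_eqI, rule iffI)
    fix x assume x: "x \<in> {x\<in>space \<Omega>. k \<le> card {l\<in>{1..m}. t < x (i,l)}}"
    then have "{l\<in>{1..m}. t < x (i,l)} \<in> SS" "x \<in> E {l\<in>{1..m}. t < x (i,l)}"
      by (auto simp: SS_def E_iff)
    then show "x \<in> (\<Union>S\<in>SS. E S)" by blast
  next
    fix x assume "x \<in> (\<Union>S\<in>SS. E S)"
    then obtain S where S: "S \<in> SS" "x \<in> E S" by blast
    then have "{l\<in>{1..m}. t < x (i,l)} = S" by (auto simp: SS_def E_iff)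
    then show "x \<in> {x\<in>space \<Omega>. k \<le> card {l\<in>{1..m}. t < x (i,l)}}"
      using S by (auto simp: SS_def E_iff)
  qed
  have finSS: "finite SS" unfolding SS_def by (rule finite_subset[of _ "Pow {1..m}"]) auto
  have disj: "disjoint_family_on E SS"
    unfolding disjoint_family_on_def by (auto simp: SS_def E_iff)
  show "{x\<in>space (PiM I (\<lambda>_. P)). k \<le> card {l\<in>{1..m}. t < x (i,l)}} \<in> sets (PiM I (\<lambda>_. P))"
    using union Esets finSS unfolding \<Omega>_def[symmetric] by auto
  define p where "p = measure P {t<..}"
  define q where "q = measure P {..t}"
  have pq: "p = 1 - q" unfolding p_def q_def
    using prob_compl[of "{..t}"] spP P(2) by (simp add: Compl_eq_Diff_UNIV[symmetric])
  have mE: "measure \<Omega> (E S) = p ^ card S * q ^ (m - card S)" if S: "S \<subseteq> {1..m}" for S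
  proof -
    have "measure \<Omega> (E S) = (\<Prod>\<iota>\<in>I. measure P (A S \<iota>))"
      unfolding \<Omega>_def E_def using P I Asets by (intro measure_PiE_prod) auto
    also have "\<dots> = (\<Prod>\<iota>\<in>{i} \<times> {1..m}. measure P (A S \<iota>))"
    proof (rule prod.mono_neutral_right)
      show "\<forall>\<iota>\<in>I - {i} \<times> {1..m}. measure P (A S \<iota>) = 1"
        using prob_space spP by (auto simp: A_def split: if_splits)
    qed (use I in auto)
    also have "\<dots> = (\<Prod>l\<in>{1..m}. measure P (A S (i,l)))"
    proof -
      have "{i} \<times> {1..m} = (\<lambda>l. (i,l)) ` {1..m}" by auto
      then show ?thesis by (simp add: prod.reindex inj_on_def)
    qed
    also have "\<dots> = (\<Prod>l\<in>{1..m}. if l \<in> S then p else q)"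
      by (intro prod.cong refl) (auto simp: A_def p_def q_def)
    also have "\<dots> = p ^ card S * q ^ (m - card S)"
    proof -
      have "{1..m} \<inter> {l. l \<in> S} = S" "{1..m} \<inter> - {l. l \<in> S} = {1..m} - S" using S by auto
      moreover have "card ({1..m} - S) = m - card S" using S by (simp add: card_Diff_subset finite_subset)
      ultimately show ?thesis by (simp add: prod.If_cases)
    qed
    finally show ?thesis .
  qed
  have "measure \<Omega> (\<Union>S\<in>SS. E S) = (\<Sum>S\<in>SS. measure \<Omega> (E S))"
  proof -
    interpret O: prob_space \<Omega> unfolding \<Omega>_def using P by (intro prob_space_PiM) auto
    show ?thesis using finSS disj Esets by (intro O.finite_measure_finite_Union) auto
  qed
  also have "\<dots> = (\<Sum>S\<in>SS. p ^ card S * q ^ (m - card S))"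
    by (intro sum.cong refl mE) (auto simp: SS_def)
  also have "\<dots> = phi m k p" unfolding SS_def phi_def sum_subsets_card pq by simp
  finally show "measure (PiM I (\<lambda>_. P)) {x\<in>space (PiM I (\<lambda>_. P)). k \<le> card {l\<in>{1..m}. t < x (i,l)}}
          = phi m k (1 - cdf P t)"
    using union unfolding \<Omega>_def[symmetric] by (simp add: pq q_def cdf_def2)
qed



lemma integrable_Icc_bounded:
  fixes f :: "real \<Rightarrow> real"
  assumes [measurable]: "f \<in> borel_measurable borel" and b: "\<And>t. t \<in> {a..b} \<Longrightarrow> \<bar>f t\<bar> \<le> B"
  shows "integrable lborel (\<lambda>t. indicator {a..b} t * f t)"
proof (rule integrableI_bounded_set[where A="{a..b}" and B=B])
  show "AE x in lborel. x \<in> {a..b} \<longrightarrow> norm (indicator {a..b} x * f x) \<le> B"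
    using b by auto
qed (auto simp: emeasure_lborel_Icc_eq)

lemma layer_cake01:
  assumes M: "prob_space M" and v[measurable]: "v \<in> borel_measurable M"
    and ae: "AE x in M. 0 \<le> v x \<and> v x \<le> 1"
  shows "integral\<^sup>L M v = (LINT t|lborel. indicator {0..1} t * measure M {x\<in>space M. t < v x})"
proof -
  interpret prob_space M by fact
  interpret pair_sigma_finite M lborel
    by (simp add: pair_sigma_finite_def prob_space_imp_sigma_finite M lborel.sigma_finite_measure_axioms)
  define g where "g t = measure M {x\<in>space M. t < v x}" for t
  have "mono (\<lambda>t. - g t)"
    unfolding mono_def g_def by (auto intro!: finite_measure_mono)
  then have "(\<lambda>t. - (- g t)) \<in> borel_measurable borel"
    by (intro borel_measurable_uminus borel_measurable_mono)
  then have g[measurable]: "g \<in> borel_measurable borel" by simp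
  have gb: "0 \<le> g t" "g t \<le> 1" for t unfolding g_def by auto
  have inth: "integrable lborel (\<lambda>t. indicator {0..1} t * g t)"
    by (rule integrable_Icc_bounded[where B=1]) (use gb in auto)
  have 1: "(\<integral>\<^sup>+x. ennreal (v x) \<partial>M)
      = (\<integral>\<^sup>+x. (\<integral>\<^sup>+t. ennreal (indicator {0..1} t * (if t < v x then 1 else 0)) \<partial>lborel) \<partial>M)"
  proof (rule nn_integral_cong_AE)
    show "AE x in M. ennreal (v x) = (\<integral>\<^sup>+t. ennreal (indicator {0..1} t * (if t < v x then 1 else 0)) \<partial>lborel)"
      using ae
    proof eventually_elim
      case (elim x)
      have "(\<lambda>t. ennreal (indicator {0..1} t * (if t < v x then 1 else 0))) = indicator {0..<v x}"
        using elim by (auto simp: indicator_def fun_eq_iff)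
      then show ?case using elim by simp
    qed
  qed
  also have "\<dots> = (\<integral>\<^sup>+t. (\<integral>\<^sup>+x. ennreal (indicator {0..1} t * (if t < v x then 1 else 0)) \<partial>M) \<partial>lborel)"
    by (rule Fubini'[symmetric]) measurable
  also have "\<dots> = (\<integral>\<^sup>+t. ennreal (indicator {0..1} t * g t) \<partial>lborel)"
  proof (rule nn_integral_cong)
    fix t
    have "(\<integral>\<^sup>+x. ennreal (indicator {0..1} t * (if t < v x then 1 else 0)) \<partial>M)
        = (\<integral>\<^sup>+x. ennreal (indicator {0..1} t) * indicator {x\<in>space M. t < v x} x \<partial>M)"
      by (intro nn_integral_cong) (auto simp: indicator_def)
    also have "\<dots> = ennreal (indicator {0..1} t) * emeasure M {x\<in>space M. t < v x}"
      by (rule nn_integral_cmult_indicator) measurable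
    also have "\<dots> = ennreal (indicator {0..1} t * g t)"
      by (simp add: g_def emeasure_eq_measure ennreal_mult)
    finally show "(\<integral>\<^sup>+x. ennreal (indicator {0..1} t * (if t < v x then 1 else 0)) \<partial>M)
        = ennreal (indicator {0..1} t * g t)" .
  qed
  also have "\<dots> = ennreal (LINT t|lborel. indicator {0..1} t * g t)"
    by (rule nn_integral_eq_integral[OF inth]) (use gb in auto)
  finally have eq: "(\<integral>\<^sup>+x. ennreal (v x) \<partial>M) = ennreal (LINT t|lborel. indicator {0..1} t * g t)" .
  have "integral\<^sup>L M v = enn2real (\<integral>\<^sup>+x. ennreal (v x) \<partial>M)"
    by (rule integral_eq_nn_integral) (use ae in auto)
  also have "\<dots> = (LINT t|lborel. indicator {0..1} t * g t)"
    unfolding eq by (rule enn2real_ennreal) (use gb in \<open>auto intro!: integral_nonneg_AE\<close>)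
  finally show ?thesis unfolding g_def .
qed



lemma AE_coord01:
  fixes P :: "real measure"
  assumes P: "prob_space P" "sets P = sets borel" "measure P {0..1} = 1" and I: "finite I" "\<iota> \<in> I"
  shows "AE x in PiM I (\<lambda>_. P). x \<iota> \<in> {0..1}"
proof -
  interpret prob_space P by fact
  have spP: "space P = UNIV" using P(2) by (rule space_P_UNIV)
  define B where "B = (\<lambda>\<kappa>. if \<kappa> = \<iota> then - {0..1} else (UNIV :: real set))"
  have Bs: "B \<kappa> \<in> sets borel" for \<kappa> by (auto simp: B_def)
  have eq: "{x\<in>space (PiM I (\<lambda>_. P)). \<not> x \<iota> \<in> {0..1}} = PiE I B"
    using I by (auto simp: space_PiM spP PiE_iff B_def extensional_def split: if_splits)
  have m: "measure (PiM I (\<lambda>_. P)) (PiE I B) = (\<Prod>\<kappa>\<in>I. measure P (B \<kappa>))"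
    using P I Bs by (intro measure_PiE_prod) auto
  also have "\<dots> = 0"
  proof -
    have "measure P (B \<iota>) = 0"
      using prob_compl[of "{0..1}"] spP P by (simp add: B_def Compl_eq_Diff_UNIV)
    then show ?thesis using I by (intro prod_zero) auto
  qed
  finally have m0: "measure (PiM I (\<lambda>_. P)) (PiE I B) = 0" .
  interpret O: prob_space "PiM I (\<lambda>_. P)" using P by (intro prob_space_PiM) auto
  have Bsets: "PiE I B \<in> sets (PiM I (\<lambda>_. P))" using I Bs P(2) by (intro sets_PiM_I_finite) auto
  show ?thesis
    by (subst AE_iff_measurable[OF Bsets eq]) (simp add: O.emeasure_eq_measure m0)
qed

lemma utility_facts:
  assumes P: "prob_space P" "sets P = sets borel" "measure P {0..1} = 1"
    and i: "i \<in> {1..n}" and k: "1 \<le> rk i j" "rk i j \<le> m"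
  shows "(\<lambda>x. utility m rk x i j) \<in> borel_measurable (PiM ({1..n}\<times>{1..m}) (\<lambda>_. P))"
    and "AE x in PiM ({1..n}\<times>{1..m}) (\<lambda>_. P). 0 \<le> utility m rk x i j \<and> utility m rk x i j \<le> 1"
    and "integrable (PiM ({1..n}\<times>{1..m}) (\<lambda>_. P)) (\<lambda>x. utility m rk x i j)"
    and "integral\<^sup>L (PiM ({1..n}\<times>{1..m}) (\<lambda>_. P)) (\<lambda>x. utility m rk x i j)
         = (LINT t|lborel. indicator {0..1} t * phi m (rk i j) (1 - cdf P t))"
proof -
  define I where "I = {1..n}\<times>{1..m}"
  define \<Omega> where "\<Omega> = PiM I (\<lambda>_. P)"
  interpret O: prob_space \<Omega> unfolding \<Omega>_def using P by (intro prob_space_PiM) auto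
  have I: "finite I" "{i} \<times> {1..m} \<subseteq> I" using i by (auto simp: I_def)
  have seteq: "{x\<in>space \<Omega>. t < utility m rk x i j} = {x\<in>space \<Omega>. rk i j \<le> card {l\<in>{1..m}. t < x (i,l)}}" for t
    using utility_gt_iff[of rk i j m, OF k] by auto
  have meas: "(\<lambda>x. utility m rk x i j) \<in> borel_measurable \<Omega>"
    unfolding borel_measurable_iff_greater
  proof
    fix t show "{w \<in> space \<Omega>. t < utility m rk w i j} \<in> sets \<Omega>"
      unfolding seteq unfolding \<Omega>_def by (rule prob_count_event(1)[OF P(1,2) I])
  qed
  have "AE x in \<Omega>. \<forall>l\<in>{1..m}. x (i,l) \<in> {0..1}"
  proof (rule AE_finite_allI)
    fix l assume "l \<in> {1..m}"
    then have "(i,l) \<in> I" using I by auto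
    then show "AE x in \<Omega>. x (i,l) \<in> {0..1}" unfolding \<Omega>_def by (rule AE_coord01[OF P I(1)])
  qed simp
  then have ae: "AE x in \<Omega>. 0 \<le> utility m rk x i j \<and> utility m rk x i j \<le> 1"
  proof eventually_elim
    case (elim x)
    define xs where "xs = map (\<lambda>l. x (i, l)) [1..<m+1]"
    have "utility m rk x i j = rev (sort xs) ! (rk i j - 1)"
      by (simp add: utility_def xs_def kth_largest_def)
    also have "\<dots> \<in> set (rev (sort xs))" using k by (intro nth_mem) (simp add: xs_def)
    finally have "utility m rk x i j \<in> set xs" by simp
    then show ?case using elim by (auto simp: xs_def)
  qed
  show "(\<lambda>x. utility m rk x i j) \<in> borel_measurable (PiM ({1..n}\<times>{1..m}) (\<lambda>_. P))"
    using meas by (simp add: \<Omega>_def I_def)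
  show "AE x in PiM ({1..n}\<times>{1..m}) (\<lambda>_. P). 0 \<le> utility m rk x i j \<and> utility m rk x i j \<le> 1"
    using ae unfolding \<Omega>_def I_def by simp
  show "integrable (PiM ({1..n}\<times>{1..m}) (\<lambda>_. P)) (\<lambda>x. utility m rk x i j)"
    unfolding I_def[symmetric] \<Omega>_def[symmetric]
    by (rule O.integrable_const_bound[where B=1]) (use ae meas in auto)
  have "integral\<^sup>L \<Omega> (\<lambda>x. utility m rk x i j)
     = (LINT t|lborel. indicator {0..1} t * measure \<Omega> {x\<in>space \<Omega>. t < utility m rk x i j})"
    by (rule layer_cake01[OF O.prob_space_axioms meas ae])
  also have "\<dots> = (LINT t|lborel. indicator {0..1} t * phi m (rk i j) (1 - cdf P t))"
  proof -
    have pc: "measure \<Omega> {x\<in>space \<Omega>. rk i j \<le> card {l\<in>{1..m}. t < x (i,l)}} = phi m (rk i j) (1 - cdf P t)" for t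
      unfolding \<Omega>_def by (rule prob_count_event(2)[OF P(1,2) I])
    show ?thesis by (simp only: seteq pc)
  qed
  finally show "integral\<^sup>L (PiM ({1..n}\<times>{1..m}) (\<lambda>_. P)) (\<lambda>x. utility m rk x i j)
         = (LINT t|lborel. indicator {0..1} t * phi m (rk i j) (1 - cdf P t))"
    by (simp add: \<Omega>_def I_def)
qed



lemma phi_mono:
  fixes P :: "real measure"
  assumes P: "prob_space P" "sets P = sets borel" and bij: "bij_betw (cdf P) {0..1} {0..1}"
    and pq: "0 \<le> p" "p \<le> q" "q \<le> 1"
  shows "phi m k p \<le> phi m k q"
proof (cases "p = q")
  case True then show ?thesis by simp
next
  case False
  interpret prob_space P by fact
  have surj: "cdf P ` {0..1} = {0..1}" using bij by (rule bij_betw_imp_surj_on)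
  have "1 - p \<in> cdf P ` {0..1}" using pq surj by auto
  then obtain tp where tp: "tp \<in> {0..1}" "cdf P tp = 1 - p" by auto
  have "1 - q \<in> cdf P ` {0..1}" using pq surj by auto
  then obtain tq where tq: "tq \<in> {0..1}" "cdf P tq = 1 - q" by auto
  have "tq < tp"
  proof (rule ccontr)
    assume "\<not> tq < tp"
    then have "cdf P tp \<le> cdf P tq" unfolding cdf_def2 using P(2)
      by (intro finite_measure_mono) auto
    then show False using tp tq pq False by auto
  qed
  define \<Omega> where "\<Omega> = PiM ({1::nat}\<times>{1..m}) (\<lambda>_. P)"
  interpret O: prob_space \<Omega> unfolding \<Omega>_def using P by (intro prob_space_PiM) auto
  have I: "finite ({1::nat}\<times>{1..m})" "{1} \<times> {1..m} \<subseteq> {1::nat}\<times>{1..m}" by auto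
  have "phi m k p = measure \<Omega> {x\<in>space \<Omega>. k \<le> card {l\<in>{1..m}. tp < x (1,l)}}"
    unfolding \<Omega>_def using prob_count_event(2)[OF P I, of k tp] tp by simp
  also have "\<dots> \<le> measure \<Omega> {x\<in>space \<Omega>. k \<le> card {l\<in>{1..m}. tq < x (1,l)}}"
  proof (rule O.finite_measure_mono)
    show "{x\<in>space \<Omega>. k \<le> card {l\<in>{1..m}. tp < x (1,l)}} \<subseteq> {x\<in>space \<Omega>. k \<le> card {l\<in>{1..m}. tq < x (1,l)}}"
    proof safe
      fix x assume "x \<in> space \<Omega>" "k \<le> card {l\<in>{1..m}. tp < x (1,l)}"
      moreover have "card {l\<in>{1..m}. tp < x (1,l)} \<le> card {l\<in>{1..m}. tq < x (1,l)}"
        using \<open>tq < tp\<close> by (intro card_mono) auto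
      ultimately show "k \<le> card {l\<in>{1..m}. tq < x (1,l)}" by simp
    qed
    show "{x\<in>space \<Omega>. k \<le> card {l\<in>{1..m}. tq < x (1,l)}} \<in> sets \<Omega>"
      unfolding \<Omega>_def by (rule prob_count_event(1)[OF P I])
  qed
  also have "\<dots> = phi m k q"
    unfolding \<Omega>_def using prob_count_event(2)[OF P I, of k tq] tq by simp
  finally show ?thesis .
qed

lemma tv_facts:
  fixes P :: "real measure"
  assumes P: "prob_space P" "sets P = sets borel" and tv: "tv_unif P \<le> \<epsilon>"
  shows "0 \<le> \<epsilon>" "\<And>t. t \<in> {0..1} \<Longrightarrow> \<bar>cdf P t - t\<bar> \<le> \<epsilon>"
proof -
  interpret prob_space P by fact
  define f where "f A = \<bar>measure P A - measure lborel (A \<inter> {0..1})\<bar>" for A :: "real set"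
  have fb: "f A \<le> 2" if "A \<in> sets borel" for A
  proof -
    have "measure lborel (A \<inter> {0..1}) \<le> measure lborel {0..(1::real)}"
      using that by (intro measure_mono_fmeasurable) (auto simp: fmeasurable_def)
    then have "measure lborel (A \<inter> {0..1}) \<le> 1" by simp
    moreover have "measure P A \<le> 1" by simp
    moreover have "0 \<le> measure lborel (A \<inter> {0..1})" "0 \<le> measure P A" by auto
    ultimately show ?thesis unfolding f_def abs_le_iff by linarith
  qed
  have bdd: "bdd_above (f ` sets borel)" using fb by (auto intro!: bdd_aboveI)
  have le: "f A \<le> \<epsilon>" if "A \<in> sets borel" for A
  proof -
    have "f A \<le> (SUP A \<in> sets borel. f A)" using that bdd by (rule cSUP_upper)
    also have "\<dots> = tv_unif P" unfolding tv_unif_def f_def by simp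
    finally show ?thesis using tv by simp
  qed
  show "0 \<le> \<epsilon>" using le[of "{}"] by (simp add: f_def)
  fix t :: real assume t: "t \<in> {0..1}"
  have "{..t} \<inter> {0..1} = {0..t}" using t by auto
  then have "f {..t} = \<bar>cdf P t - t\<bar>" using t by (simp add: f_def cdf_def2)
  then show "\<bar>cdf P t - t\<bar> \<le> \<epsilon>" using le[of "{..t}"] by simp
qed

lemma Beta_nat:
  assumes "s \<le> m"
  shows "real (m choose s) * Beta (real (m - s) + 1) (real s + 1) = 1 / (real m + 1)"
proof -
  have g1: "Gamma (real (m - s) + 1) = fact (m - s)" using Gamma_fact[of "m - s"] by (simp add: add.commute)
  have g2: "Gamma (real s + 1) = fact s" using Gamma_fact[of s] by (simp add: add.commute)
  have e: "real (m - s) + 1 + (real s + 1) = 1 + of_nat (Suc m)" using assms by (simp add: of_nat_diff)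
  have g3: "Gamma (real (m - s) + 1 + (real s + 1)) = fact (Suc m)" unfolding e by (rule Gamma_fact)
  have "real (m choose s) * Beta (real (m - s) + 1) (real s + 1)
      = fact m / (fact s * fact (m - s)) * (fact (m - s) * fact s / fact (Suc m))"
    unfolding Beta_def g1 g2 g3 binomial_fact[OF assms] by simp
  also have "\<dots> = fact m / fact (Suc m)" by (simp add: field_simps)
  also have "\<dots> = 1 / (real m + 1)"
  proof -
    have pos: "(0::real) < fact m" by simp
    have nz: "fact m + fact m * real m \<noteq> 0" using pos
      by (smt (verit) mult_nonneg_nonneg of_nat_0_le_iff)
    show ?thesis using nz by (simp add: field_simps)
  qed
  finally show ?thesis .
qed

lemma phi_unif:
  assumes "k \<le> m"
  shows "(LINT t|lborel. indicator {0..1} t * phi m k (1 - t)) = (real m + 1 - real k) / (real m + 1)"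
proof -
  have each: "((\<lambda>t. (1 - t) ^ s * t ^ (m - s)) has_integral Beta (real (m - s) + 1) (real s + 1)) {0..1}" for s
  proof -
    have "((\<lambda>t. t powr (real (m - s) + 1 - 1) * (1 - t) powr (real s + 1 - 1)) has_integral Beta (real (m - s) + 1) (real s + 1)) {0..1}"
      by (rule has_integral_Beta_real) auto
    then have "((\<lambda>t. t powr (real (m - s) + 1 - 1) * (1 - t) powr (real s + 1 - 1)) has_integral Beta (real (m - s) + 1) (real s + 1)) {0<..<1}"
      by (simp add: has_integral_Icc_iff_Ioo)
    then have "((\<lambda>t. (1 - t) ^ s * t ^ (m - s)) has_integral Beta (real (m - s) + 1) (real s + 1)) {0<..<1}"
      by (rule has_integral_cong[THEN iffD1, rotated]) (auto simp: powr_realpow)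
    then show ?thesis by (simp add: has_integral_Icc_iff_Ioo)
  qed
  have each': "((\<lambda>t. real (m choose s) * (1 - t) ^ s * (1 - (1 - t)) ^ (m - s)) has_integral
      real (m choose s) * Beta (real (m - s) + 1) (real s + 1)) {0..1}" for s
    using has_integral_mult_right[OF each[of s], of "real (m choose s)"] by (simp add: mult.assoc)
  have "((\<lambda>t. phi m k (1 - t)) has_integral (\<Sum>s\<in>{k..m}. real (m choose s) * Beta (real (m - s) + 1) (real s + 1))) {0..1}"
    unfolding phi_def by (rule has_integral_sum[OF finite_atLeastAtMost each'])
  also have "(\<Sum>s\<in>{k..m}. real (m choose s) * Beta (real (m - s) + 1) (real s + 1)) = (\<Sum>s\<in>{k..m}. 1 / (real m + 1))"
    by (intro sum.cong refl Beta_nat) auto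
  also have "\<dots> = (real m + 1 - real k) / (real m + 1)"
    using assms by (simp add: of_nat_diff)
  finally have hi: "((\<lambda>t. phi m k (1 - t)) has_integral (real m + 1 - real k) / (real m + 1)) {0..1}" .
  have cont: "continuous_on {0..1} (\<lambda>t. phi m k (1 - t))"
    unfolding phi_def by (intro continuous_intros)
  have si: "set_integrable lborel {0..1} (\<lambda>t. phi m k (1 - t))"
    unfolding set_integrable_def by (rule borel_integrable_compact[OF compact_Icc cont])
  have "(LINT t:{0..1}|lborel. phi m k (1 - t)) = integral {0..1} (\<lambda>t. phi m k (1 - t))"
    by (rule set_borel_integral_eq_integral(2)[OF si])
  also have "\<dots> = (real m + 1 - real k) / (real m + 1)" using hi by (rule integral_unique)
  finally show ?thesis by (simp add: set_lebesgue_integral_def)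
qed



lemma phi_measurable[measurable]:
  assumes [measurable]: "g \<in> borel_measurable M"
  shows "(\<lambda>x. phi m k (g x)) \<in> borel_measurable M"
  unfolding phi_def by measurable

lemma phi_nonneg: "0 \<le> p \<Longrightarrow> p \<le> 1 \<Longrightarrow> 0 \<le> phi m k p"
  unfolding phi_def by (intro sum_nonneg mult_nonneg_nonneg) auto

lemma phi_one: "k \<le> m \<Longrightarrow> phi m k 1 = 1"
proof -
  assume km: "k \<le> m"
  have "phi m k 1 = (\<Sum>s\<in>{k..m}. if s = m then 1 else 0)"
    unfolding phi_def by (intro sum.cong refl) auto
  also have "\<dots> = 1" using km by simp
  finally show ?thesis .
qed

lemma G_bounds:
  fixes P :: "real measure"
  assumes P: "prob_space P" "sets P = sets borel" and bij: "bij_betw (cdf P) {0..1} {0..1}"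
    and e0: "0 \<le> \<epsilon>" and e1: "\<epsilon> \<le> 1" and cl: "\<And>t. t \<in> {0..1} \<Longrightarrow> \<bar>cdf P t - t\<bar> \<le> \<epsilon>"
    and k: "1 \<le> k" "k \<le> m"
  shows "\<bar>(LINT t|lborel. indicator {0..1} t * phi m k (1 - cdf P t)) - (real m + 1 - real k) / (real m + 1)\<bar> \<le> \<epsilon>"
proof -
  interpret prob_space P by fact
  define F where "F = cdf P"
  define h where "h t = phi m k (1 - t)" for t
  define c where "c = (real m + 1 - real k) / (real m + 1)"
  have Fm: "mono F" unfolding F_def mono_def
  proof (intro allI impI)
    fix x y :: real assume "x \<le> y"
    then show "cdf P x \<le> cdf P y" unfolding cdf_def2 using P(2) by (intro finite_measure_mono) auto
  qed
  have F[measurable]: "F \<in> borel_measurable borel" using Fm by (rule borel_measurable_mono)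
  have F01: "0 \<le> F t" "F t \<le> 1" for t unfolding F_def cdf_def2 by auto
  have mono: "phi m k p \<le> phi m k q" if "0 \<le> p" "p \<le> q" "q \<le> 1" for p q
    using phi_mono[OF P bij that] .
  have phi01: "0 \<le> phi m k p" "phi m k p \<le> 1" if "0 \<le> p" "p \<le> 1" for p
    using phi_nonneg[OF that] mono[OF that(1,2)] phi_one[OF k(2)] by auto
  have cF: "\<bar>F t - t\<bar> \<le> \<epsilon>" if "t \<in> {0..1}" for t using cl[OF that] by (simp add: F_def)
  have hc: "(LINT t|lborel. indicator {0..1} t * h t) = c"
    unfolding h_def c_def using phi_unif[OF k(2)] .
  have hm[measurable]: "h \<in> borel_measurable borel" unfolding h_def by measurable
  have int_h: "integrable lborel (\<lambda>t. indicator {a..b} t * h t)" if "0 \<le> a" "b \<le> 1" for a b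
    by (rule integrable_Icc_bounded[where B=1]) (use that phi01 in \<open>auto simp: h_def\<close>)
  have int_ind: "integrable lborel (\<lambda>t. indicator {a..b} t * (1::real))" for a b :: real
    by (rule integrable_Icc_bounded[where B=1]) auto
  have ind_eq: "(LINT t|lborel. indicator {0..\<epsilon>} t * (1::real)) = \<epsilon>"
    using e0 by simp
  have int_psi: "integrable lborel (\<lambda>t. indicator {0..1} t * phi m k (1 - F t))"
    by (rule integrable_Icc_bounded[where B=1]) (use phi01 F01 in auto)
  have int_sh1: "integrable lborel (\<lambda>t. indicator {\<epsilon>..1} t * h (t - \<epsilon>))"
    by (rule integrable_Icc_bounded[where B=1]) (use phi01 e0 in \<open>auto simp: h_def\<close>)
  have "(LINT t|lborel. indicator {0..1} t * phi m k (1 - F t))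
      \<le> (LINT t|lborel. indicator {0..\<epsilon>} t * 1 + indicator {\<epsilon>..1} t * h (t - \<epsilon>))"
  proof (rule integral_mono[OF int_psi Bochner_Integration.integrable_add[OF int_ind int_sh1]])
    fix t :: real
    show "indicator {0..1} t * phi m k (1 - F t) \<le> indicator {0..\<epsilon>} t * 1 + indicator {\<epsilon>..1} t * h (t - \<epsilon>)"
    proof (cases "t \<in> {0..1}")
      case False
      then have "t \<notin> {0..\<epsilon>}" "t \<notin> {\<epsilon>..1}" using e0 e1 by auto
      then show ?thesis using False by simp
    next
      case True
      show ?thesis
      proof (cases "t < \<epsilon>")
        case True2: True
        then have "t \<in> {0..\<epsilon>}" "t \<notin> {\<epsilon>..1}" using True by auto
        then show ?thesis using True phi01[of "1 - F t"] F01[of t] by simp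
      next
        case False
        then have tin: "t \<notin> {0..\<epsilon>} \<or> t = \<epsilon>" "t \<in> {\<epsilon>..1}" using True by auto
        have "phi m k (1 - F t) \<le> phi m k (1 - (t - \<epsilon>))"
          using cF[OF True] F01[of t] False True by (intro mono) auto
        moreover have "0 \<le> (indicator {0..\<epsilon>} t :: real)" by (simp add: indicator_def)
        ultimately have "phi m k (1 - F t) \<le> indicator {0..\<epsilon>} t * 1 + h (t - \<epsilon>)"
          unfolding h_def by linarith
        then show ?thesis using True tin(2) by simp
      qed
    qed
  qed
  also have "\<dots> = \<epsilon> + (LINT t|lborel. indicator {\<epsilon>..1} t * h (t - \<epsilon>))"
    using ind_eq int_ind int_sh1 by simp
  also have "(LINT t|lborel. indicator {\<epsilon>..1} t * h (t - \<epsilon>)) = (LINT s|lborel. indicator {0..1-\<epsilon>} s * h s)"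
  proof -
    have "(LINT t|lborel. indicator {\<epsilon>..1} t * h (t - \<epsilon>))
        = \<bar>1\<bar> *\<^sub>R (LINT s|lborel. indicator {\<epsilon>..1} (\<epsilon> + 1 * s) * h (\<epsilon> + 1 * s - \<epsilon>))"
      by (rule lborel_integral_real_affine) simp
    also have "\<dots> = (LINT s|lborel. indicator {0..1-\<epsilon>} s * h s)"
    proof -
      have "(\<lambda>s. indicator {\<epsilon>..1} (\<epsilon> + 1 * s) * h (\<epsilon> + 1 * s - \<epsilon>)) = (\<lambda>s. indicator {0..1-\<epsilon>} s * h s)"
        by (auto simp: indicator_def fun_eq_iff)
      then show ?thesis by simp
    qed
    finally show ?thesis .
  qed
  also have "(LINT s|lborel. indicator {0..1-\<epsilon>} s * h s) \<le> (LINT s|lborel. indicator {0..1} s * h s)"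
  proof (rule integral_mono[OF int_h int_h])
    fix s show "indicator {0..1-\<epsilon>} s * h s \<le> indicator {0..1} s * h s"
      using e0 phi01[of "1 - s"] by (auto simp: indicator_def h_def)
  qed (use e0 in auto)
  finally have up: "(LINT t|lborel. indicator {0..1} t * phi m k (1 - F t)) \<le> \<epsilon> + c"
    using hc by simp
  have int_sh2: "integrable lborel (\<lambda>t. indicator {0..1-\<epsilon>} t * h (t + \<epsilon>))"
    by (rule integrable_Icc_bounded[where B=1]) (use phi01 e0 in \<open>auto simp: h_def\<close>)
  have "(LINT t|lborel. indicator {\<epsilon>..1} t * h t) = (LINT t|lborel. indicator {0..1-\<epsilon>} t * h (t + \<epsilon>))"
  proof -
    have "(LINT t|lborel. indicator {\<epsilon>..1} t * h t)
        = \<bar>1\<bar> *\<^sub>R (LINT s|lborel. indicator {\<epsilon>..1} (\<epsilon> + 1 * s) * h (\<epsilon> + 1 * s))"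
      by (rule lborel_integral_real_affine) simp
    also have "\<dots> = (LINT s|lborel. indicator {0..1-\<epsilon>} s * h (s + \<epsilon>))"
    proof -
      have "(\<lambda>s. indicator {\<epsilon>..1} (\<epsilon> + 1 * s) * h (\<epsilon> + 1 * s)) = (\<lambda>s. indicator {0..1-\<epsilon>} s * h (s + \<epsilon>))"
        by (auto simp: indicator_def fun_eq_iff add.commute)
      then show ?thesis by simp
    qed
    finally show ?thesis .
  qed
  also have "\<dots> \<le> (LINT t|lborel. indicator {0..1} t * phi m k (1 - F t))"
  proof (rule integral_mono[OF int_sh2 int_psi])
    fix t :: real
    show "indicator {0..1-\<epsilon>} t * h (t + \<epsilon>) \<le> indicator {0..1} t * phi m k (1 - F t)"
    proof (cases "t \<in> {0..1-\<epsilon>}")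
      case True
      then have t01: "t \<in> {0..1}" using e0 by auto
      have "h (t + \<epsilon>) \<le> phi m k (1 - F t)"
        unfolding h_def using cF[OF t01] F01[of t] True by (intro mono) auto
      then show ?thesis using True t01 by simp
    next
      case False
      have "0 \<le> indicator {0..1} t * phi m k (1 - F t)"
        using phi01[of "1 - F t"] F01[of t] by (simp add: indicator_def)
      then show ?thesis using False by simp
    qed
  qed
  finally have lo1: "(LINT t|lborel. indicator {\<epsilon>..1} t * h t) \<le> (LINT t|lborel. indicator {0..1} t * phi m k (1 - F t))" .
  have "c \<le> (LINT t|lborel. indicator {\<epsilon>..1} t * h t + indicator {0..\<epsilon>} t * 1)"
    unfolding hc[symmetric]
  proof (rule integral_mono[OF int_h Bochner_Integration.integrable_add[OF int_h int_ind]])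
    fix t show "indicator {0..1} t * h t \<le> indicator {\<epsilon>..1} t * h t + indicator {0..\<epsilon>} t * 1"
      using phi01[of "1 - t"] e0 by (auto simp: indicator_def h_def)
  qed (use e0 in auto)
  also have "\<dots> = (LINT t|lborel. indicator {\<epsilon>..1} t * h t) + \<epsilon>"
    using ind_eq int_ind int_h[of \<epsilon> 1] e0 by simp
  finally have lo: "c - \<epsilon> \<le> (LINT t|lborel. indicator {0..1} t * phi m k (1 - F t))"
    using lo1 by simp
  show ?thesis using up lo unfolding F_def c_def by (simp add: abs_le_iff)
qed



lemma sum_real_Icc: "(\<Sum>k\<in>{1..m}. real k) = real m * (real m + 1) / 2"
  by (induction m) (auto simp: field_simps)

theorem theorem12:
  fixes P :: "real measure" and \<epsilon> :: real and n m :: nat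
    and rk :: "nat \<Rightarrow> nat \<Rightarrow> nat" and b :: nat
  assumes "prob_space P"
    and "sets P = sets borel"
    and "measure P {0..1} = 1"
    and "\<forall>x. measure P {x} = 0"
    and "bij_betw (cdf P) {0..1} {0..1}"
    and "tv_unif P \<le> \<epsilon>" and "\<epsilon> \<le> 1/10"
    and "is_profile n m rk"
    and "b \<in> {1..m}" and "\<forall>j\<in>{1..m}. borda n m rk j \<le> borda n m rk b"
  shows "exp_sw P n m rk b \<ge> (1 - 5 * \<epsilon>) * (MAX j\<in>{1..m}. exp_sw P n m rk j)"
proof -
  note P = assms(1,2,3)
  have e0: "0 \<le> \<epsilon>" and cl: "\<And>t. t \<in> {0..1} \<Longrightarrow> \<bar>cdf P t - t\<bar> \<le> \<epsilon>"
    using tv_facts[OF assms(1,2,6)] by auto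
  have e1: "\<epsilon> \<le> 1" using assms(7) by simp
  have bij: "bij_betw (rk i) {1..m} {1..m}" if "i \<in> {1..n}" for i
    using assms(8) that unfolding is_profile_def by blast
  have rkin: "rk i j \<in> {1..m}" if "i \<in> {1..n}" "j \<in> {1..m}" for i j
    using bij_betw_apply[OF bij[OF that(1)] that(2)] .
  define Gk where "Gk k = (LINT t|lborel. indicator {0..1} t * phi m k (1 - cdf P t))" for k
  define c where "c k = (real m + 1 - real k) / (real m + 1)" for k
  have Gc: "\<bar>Gk k - c k\<bar> \<le> \<epsilon>" if "k \<in> {1..m}" for k
    unfolding Gk_def c_def using G_bounds[OF P(1,2) assms(5) e0 e1 cl] that by auto
  define E where "E j = exp_sw P n m rk j" for j
  have Eeq: "E j = (\<Sum>i\<in>{1..n}. Gk (rk i j))" if j: "j \<in> {1..m}" for j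
  proof -
    have "E j = integral\<^sup>L (PiM ({1..n} \<times> {1..m}) (\<lambda>_. P)) (\<lambda>x. \<Sum>i\<in>{1..n}. utility m rk x i j)"
      by (simp add: E_def exp_sw_def sw_def)
    also have "\<dots> = (\<Sum>i\<in>{1..n}. integral\<^sup>L (PiM ({1..n} \<times> {1..m}) (\<lambda>_. P)) (\<lambda>x. utility m rk x i j))"
    proof (rule Bochner_Integration.integral_sum)
      fix i assume i: "i \<in> {1..n}"
      show "integrable (PiM ({1..n} \<times> {1..m}) (\<lambda>_. P)) (\<lambda>x. utility m rk x i j)"
        using utility_facts(3)[OF P i] rkin[OF i j] by auto
    qed
    also have "\<dots> = (\<Sum>i\<in>{1..n}. Gk (rk i j))"
    proof (rule sum.cong[OF refl])
      fix i assume i: "i \<in> {1..n}"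
      show "integral\<^sup>L (PiM ({1..n} \<times> {1..m}) (\<lambda>_. P)) (\<lambda>x. utility m rk x i j) = Gk (rk i j)"
        using utility_facts(4)[OF P i] rkin[OF i j] by (auto simp: Gk_def)
    qed
    finally show ?thesis .
  qed
  have borda_eq: "real (borda n m rk j) / (real m + 1) = (\<Sum>i\<in>{1..n}. c (rk i j))" if j: "j \<in> {1..m}" for j
  proof -
    have "real (borda n m rk j) = (\<Sum>i\<in>{1..n}. (real m + 1 - real (rk i j)))"
      unfolding borda_def of_nat_sum
    proof (intro sum.cong refl)
      fix i assume i: "i \<in> {1..n}"
      have "rk i j \<le> m + 1" using rkin[OF i j] by auto
      then show "real (m + 1 - rk i j) = real m + 1 - real (rk i j)" by (simp add: of_nat_diff)
    qed
    then show ?thesis by (simp add: c_def sum_divide_distrib)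
  qed
  have Eapprox: "\<bar>E j - real (borda n m rk j) / (real m + 1)\<bar> \<le> real n * \<epsilon>" if j: "j \<in> {1..m}" for j
  proof -
    have "\<bar>E j - real (borda n m rk j) / (real m + 1)\<bar> = \<bar>\<Sum>i\<in>{1..n}. (Gk (rk i j) - c (rk i j))\<bar>"
      unfolding Eeq[OF j] borda_eq[OF j] by (simp add: sum_subtractf)
    also have "\<dots> \<le> (\<Sum>i\<in>{1..n}. \<bar>Gk (rk i j) - c (rk i j)\<bar>)" by (rule sum_abs)
    also have "\<dots> \<le> (\<Sum>i\<in>{1..n}. \<epsilon>)"
      by (intro sum_mono Gc rkin j)
    also have "\<dots> = real n * \<epsilon>" by simp
    finally show ?thesis .
  qed
  have m1: "1 \<le> m" using assms(9) by simp
  define M where "M = (MAX j\<in>{1..m}. E j)"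
  have fin: "finite (E ` {1..m})" by simp
  have ne: "E ` {1..m} \<noteq> {}" using m1 by auto
  have Mge: "E j \<le> M" if "j \<in> {1..m}" for j unfolding M_def using fin that by (intro Max_ge) auto
  obtain js where js: "js \<in> {1..m}" "M = E js"
    using Max_in[OF fin ne] unfolding M_def by auto
  have EbM: "E b \<ge> M - 2 * real n * \<epsilon>"
  proof -
    have "real (borda n m rk js) \<le> real (borda n m rk b)" using assms(10) js(1) by auto
    then have "real (borda n m rk js) / (real m + 1) \<le> real (borda n m rk b) / (real m + 1)"
      by (intro divide_right_mono) auto
    then show ?thesis using Eapprox[OF js(1)] Eapprox[OF assms(9)] js(2) by (auto simp: abs_le_iff)
  qed
  have sumE: "(\<Sum>j\<in>{1..m}. E j) = (\<Sum>i\<in>{1..n}. \<Sum>k\<in>{1..m}. Gk k)"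
  proof -
    have "(\<Sum>j\<in>{1..m}. E j) = (\<Sum>j\<in>{1..m}. \<Sum>i\<in>{1..n}. Gk (rk i j))"
      by (intro sum.cong refl Eeq)
    also have "\<dots> = (\<Sum>i\<in>{1..n}. \<Sum>j\<in>{1..m}. Gk (rk i j))" by (rule sum.swap)
    also have "\<dots> = (\<Sum>i\<in>{1..n}. \<Sum>k\<in>{1..m}. Gk k)"
    proof (rule sum.cong[OF refl])
      fix i assume i: "i \<in> {1..n}"
      show "(\<Sum>j\<in>{1..m}. Gk (rk i j)) = (\<Sum>k\<in>{1..m}. Gk k)"
        by (rule sum.reindex_bij_betw[OF bij[OF i]])
    qed
    finally show ?thesis .
  qed
  have sumc: "(\<Sum>k\<in>{1..m}. c k) = real m / 2"
  proof -
    have "(\<Sum>k\<in>{1..m}. (real m + 1 - real k)) = real m * (real m + 1) - real m * (real m + 1) / 2"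
      using sum_real_Icc[of m] by (simp add: sum_subtractf)
    then show ?thesis unfolding c_def sum_divide_distrib[symmetric] by (simp add: field_simps)
  qed
  have "(\<Sum>k\<in>{1..m}. Gk k) \<ge> (\<Sum>k\<in>{1..m}. c k - \<epsilon>)"
  proof (rule sum_mono)
    fix k assume "k \<in> {1..m}"
    then show "c k - \<epsilon> \<le> Gk k" using Gc[of k] by (simp add: abs_le_iff)
  qed
  then have sGk: "(\<Sum>k\<in>{1..m}. Gk k) \<ge> real m / 2 - real m * \<epsilon>"
    using sumc by (simp add: sum_subtractf)
  have "(\<Sum>j\<in>{1..m}. E j) \<le> real (card {1..m}) * M"
    by (rule sum_bounded_above) (rule Mge)
  then have "real m * M \<ge> real n * (real m / 2 - real m * \<epsilon>)"
    using sumE sGk by (auto intro: order.trans[OF mult_left_mono[OF sGk]])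
  then have "real m * M \<ge> real m * (real n * (1/2 - \<epsilon>))" by (simp add: algebra_simps)
  then have Mlow: "M \<ge> real n * (1/2 - \<epsilon>)" using m1 by simp
  have "\<epsilon> * M \<ge> \<epsilon> * (real n * (1/2 - \<epsilon>))" using Mlow e0 by (rule mult_left_mono)
  moreover have "\<epsilon> * (real n * (1/2 - \<epsilon>)) \<ge> \<epsilon> * (real n * (2/5))"
    using e0 assms(7) by (intro mult_left_mono) auto
  ultimately have "E b \<ge> (1 - 5 * \<epsilon>) * M" using EbM by (simp add: algebra_simps)
  then show ?thesis unfolding E_def M_def by simp
qed


end
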